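(* Let $E\to M$ be a vector bundle of rank at least $n$ equipped with a pseudo-metric $\langle\cdot,\cdot\rangle$ (a nondegenerate symmetric bilinear form). Let $\widehat{u}^1,\dots,\widehat{u}^n\in\Gamma(E)$ be linearly independent over $C^\infty(M)$, and let $\widehat{Z}_1,\dots,\widehat{Z}_n$ be covariant differential operators on $E$ with symbols $\widehat{z}_1,\dots,\widehat{z}_n\in\Gamma(TM)$ satisfying $\langle\widehat{Z}_i(e_1),e_2\rangle+\langle e_1,\widehat{Z}_i(e_2)\rangle=\widehat{z}_i\langle e_1,e_2\rangle$ for all $e_1,e_2\in\Gamma(E)$ and all $i$. Define $$a_E(e)=\sum_i\langle e,\widehat{u}^i\rangle\widehat{z}_i,\quad \mathcal{D}(f)=\sum_i\widehat{z}_i(f)\,\widehat{u}^i,\quad \nabla_{e_1}e_2=\sum_i\langle e_1,\widehat{u}^i\rangle\widehat{Z}_i(e_2),\quad \Delta_{e_2}e_1=\sum_i\langle\widehat{Z}_i(e_1),e_2\rangle\widehat{u}^i,$$ $$e_1\circ e_2=\nabla_{e_1}e_2-\nabla_{e_2}e_1+\Delta_{e_2}e_1=\sum_i\Big(\langle e_1,\widehat{u}^i\rangle\widehat{Z}_i(e_2)-\langle e_2,\widehat{u}^i\rangle\widehat{Z}_i(e_1)+\langle \widehat{Z}_i(e_1),e_2\rangle\widehat{u}^i\Big).$$ Suppose there are functions $C_{ik}^j\in C^\infty(M)$ such that for all $i,j\in\{1,\dots,n\}$: $$\widehat{Z}_i(\widehat{u}^j)=\sum_k C_{ik}^j\widehat{u}^k,\qquad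 \langle\widehat{u}^i,\widehat{u}^j\rangle=0,\qquad [\widehat{Z}_i,\widehat{Z}_j]=\sum_k\big(C_{ji}^k-C_{ij}^k\big)\widehat{Z}_k.$$ Then for all $e_1,e_2,e_3\in\Gamma(E)$, $$C^\nabla(e_1,e_2)e_3=\nabla_{\Delta_{e_3}e_2}e_1=Q(e_1,e_2,e_3)=\big(\mathcal{D}\langle e_1,e_3\rangle\big)\circ e_2=0,$$ and $(E,\langle\cdot,\cdot\rangle,\circ,a_E)$ is a Courant algebroid.
   Context: A covariant differential operator on $E$ is an $\mathbb{R}$-linear map $\widehat{Z}:\Gamma(E)\to\Gamma(E)$ with a vector field $\widehat{z}$ (its symbol) such that $\widehat{Z}(fe)=f\widehat{Z}(e)+\widehat{z}(f)e$; the commutator $[\widehat{Z}_i,\widehat{Z}_j]=\widehat{Z}_i\widehat{Z}_j-\widehat{Z}_j\widehat{Z}_i$. Note $\langle\mathcal{D}(f),e\rangle=a_E(e)(f)$. The Courant curvature is $C^\nabla(e_1,e_2)=\nabla_{e_1}\nabla_{e_2}-\nabla_{e_2}\nabla_{e_1}-\nabla_{e_1\circ e_2}$ (an operator on $\Gamma(E)$), and $Q(e_1,e_2,e_3)\in\Gamma(E)$ is defined by $\langle Q(e_1,e_2,e_3),t\rangle=\langle C^\nabla(e_1,t)e_2,e_3\rangle+\langle C^\nabla(e_2,t)e_3,e_1\rangle+\langle C^\nabla(e_3,t)e_1,e_2\rangle$ for all $t\in\Gamma(E)$. A Courant algebroid $(E,\langle\cdot,\cdot\rangle,\circ,a_E)$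 consists of a pseudo-metric bundle, a bundle map $a_E:E\to TM$ and an $\mathbb{R}$-bilinear bracket $\circ$ on $\Gamma(E)$ such that (i) $a_E(e)\langle h_1,h_2\rangle=\langle e\circ h_1,h_2\rangle+\langle h_1,e\circ h_2\rangle$, (ii) $e\circ e=\tfrac12\mathcal{D}\langle e,e\rangle$ where $\langle\mathcal{D}f,e\rangle=a_E(e)(f)$, and (iii) $e_1\circ(e_2\circ e_3)=(e_1\circ e_2)\circ e_3+e_2\circ(e_1\circ e_3)$, for all sections. *)

theory Defs
  imports Complex_Main
begin

text \<open>C-infinity(M) is an abstract commutative real algebra of type 'f;
  Gamma(E) is an 'f-module of type 'e with scalar action smul; vector fields on M are
  R-linear derivations of 'f.  Real scalars act on sections via smul (of_real c).\<close>

definition is_vector_field :: "('f::{comm_ring_1,real_algebra_1} \<Rightarrow> 'f) \<Rightarrow> bool" where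
  "is_vector_field z \<longleftrightarrow>
     (\<forall>f g. z (f + g) = z f + z g) \<and>
     (\<forall>(c::real) f. z (c *\<^sub>R f) = c *\<^sub>R z f) \<and>
     (\<forall>f g. z (f * g) = f * z g + z f * g)"

definition cov_diff_op ::
  "('f::{comm_ring_1,real_algebra_1} \<Rightarrow> 'e::ab_group_add \<Rightarrow> 'e) \<Rightarrow> ('e \<Rightarrow> 'e) \<Rightarrow> ('f \<Rightarrow> 'f) \<Rightarrow> bool" where
  "cov_diff_op smul Z z \<longleftrightarrow>
     is_vector_field z \<and>
     (\<forall>e1 e2. Z (e1 + e2) = Z e1 + Z e2) \<and>
     (\<forall>(c::real) e. Z (smul (of_real c) e) = smul (of_real c) (Z e)) \<and>
     (\<forall>f e. Z (smul f e) = smul f (Z e) + smul (z f) e)"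

definition pseudo_metric ::
  "('f::comm_ring_1 \<Rightarrow> 'e::ab_group_add \<Rightarrow> 'e) \<Rightarrow> ('e \<Rightarrow> 'e \<Rightarrow> 'f) \<Rightarrow> bool" where
  "pseudo_metric smul ip \<longleftrightarrow>
     (\<forall>e1 e2. ip e1 e2 = ip e2 e1) \<and>
     (\<forall>e1 e2 e3. ip (e1 + e2) e3 = ip e1 e3 + ip e2 e3) \<and>
     (\<forall>f e1 e2. ip (smul f e1) e2 = f * ip e1 e2) \<and>
     (\<forall>e. (\<forall>t. ip e t = 0) \<longrightarrow> e = 0)"

definition lin_indep_family ::
  "('f::comm_ring_1 \<Rightarrow> 'e::ab_group_add \<Rightarrow> 'e) \<Rightarrow> nat \<Rightarrow> (nat \<Rightarrow> 'e) \<Rightarrow> bool" where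
  "lin_indep_family smul n u \<longleftrightarrow>
     (\<forall>c. (\<Sum>i\<in>{1..n}. smul (c i) (u i)) = 0 \<longrightarrow> (\<forall>i\<in>{1..n}. c i = 0))"

definition anchorE :: "('e \<Rightarrow> 'e \<Rightarrow> 'f::comm_ring_1) \<Rightarrow> nat \<Rightarrow> (nat \<Rightarrow> 'e) \<Rightarrow> (nat \<Rightarrow> 'f \<Rightarrow> 'f)
    \<Rightarrow> 'e \<Rightarrow> 'f \<Rightarrow> 'f" where
  "anchorE ip n u z e = (\<lambda>f. \<Sum>i\<in>{1..n}. ip e (u i) * z i f)"

definition DD :: "('f::comm_ring_1 \<Rightarrow> 'e::ab_group_add \<Rightarrow> 'e) \<Rightarrow> nat \<Rightarrow> (nat \<Rightarrow> 'e) \<Rightarrow> (nat \<Rightarrow> 'f \<Rightarrow> 'f)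
    \<Rightarrow> 'f \<Rightarrow> 'e" where
  "DD smul n u z f = (\<Sum>i\<in>{1..n}. smul (z i f) (u i))"

definition nablaE :: "('f::comm_ring_1 \<Rightarrow> 'e::ab_group_add \<Rightarrow> 'e) \<Rightarrow> ('e \<Rightarrow> 'e \<Rightarrow> 'f) \<Rightarrow> nat
    \<Rightarrow> (nat \<Rightarrow> 'e) \<Rightarrow> (nat \<Rightarrow> 'e \<Rightarrow> 'e) \<Rightarrow> 'e \<Rightarrow> 'e \<Rightarrow> 'e" where
  "nablaE smul ip n u Z e1 e2 = (\<Sum>i\<in>{1..n}. smul (ip e1 (u i)) (Z i e2))"

text \<open>DeltaE ... e2 e1 is Delta_{e2} e1.\<close>
definition DeltaE :: "('f::comm_ring_1 \<Rightarrow> 'e::ab_group_add \<Rightarrow> 'e) \<Rightarrow> ('e \<Rightarrow> 'e \<Rightarrow> 'f) \<Rightarrow> nat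
    \<Rightarrow> (nat \<Rightarrow> 'e) \<Rightarrow> (nat \<Rightarrow> 'e \<Rightarrow> 'e) \<Rightarrow> 'e \<Rightarrow> 'e \<Rightarrow> 'e" where
  "DeltaE smul ip n u Z e2 e1 = (\<Sum>i\<in>{1..n}. smul (ip (Z i e1) e2) (u i))"

definition circE :: "('f::comm_ring_1 \<Rightarrow> 'e::ab_group_add \<Rightarrow> 'e) \<Rightarrow> ('e \<Rightarrow> 'e \<Rightarrow> 'f) \<Rightarrow> nat
    \<Rightarrow> (nat \<Rightarrow> 'e) \<Rightarrow> (nat \<Rightarrow> 'e \<Rightarrow> 'e) \<Rightarrow> 'e \<Rightarrow> 'e \<Rightarrow> 'e" where
  "circE smul ip n u Z e1 e2 =
     nablaE smul ip n u Z e1 e2 - nablaE smul ip n u Z e2 e1 + DeltaE smul ip n u Z e2 e1"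

definition courant_curv :: "('e \<Rightarrow> 'e \<Rightarrow> 'e::ab_group_add) \<Rightarrow> ('e \<Rightarrow> 'e \<Rightarrow> 'e) \<Rightarrow> 'e \<Rightarrow> 'e \<Rightarrow> 'e \<Rightarrow> 'e" where
  "courant_curv nab cir e1 e2 e3 = nab e1 (nab e2 e3) - nab e2 (nab e1 e3) - nab (cir e1 e2) e3"

definition Qop :: "('e \<Rightarrow> 'e \<Rightarrow> 'f::comm_ring_1) \<Rightarrow> ('e \<Rightarrow> 'e \<Rightarrow> 'e::ab_group_add) \<Rightarrow> ('e \<Rightarrow> 'e \<Rightarrow> 'e)
    \<Rightarrow> 'e \<Rightarrow> 'e \<Rightarrow> 'e \<Rightarrow> 'e" where
  "Qop ip nab cir e1 e2 e3 = (THE q. \<forall>t.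
      ip q t = ip (courant_curv nab cir e1 t e2) e3 + ip (courant_curv nab cir e2 t e3) e1
             + ip (courant_curv nab cir e3 t e1) e2)"

definition courant_D :: "('e \<Rightarrow> 'e \<Rightarrow> 'f) \<Rightarrow> ('e \<Rightarrow> 'f \<Rightarrow> 'f) \<Rightarrow> 'f \<Rightarrow> 'e" where
  "courant_D ip a f = (THE d. \<forall>e. ip d e = a e f)"

definition courant_algebroid ::
  "('f::{comm_ring_1,real_algebra_1} \<Rightarrow> 'e::ab_group_add \<Rightarrow> 'e) \<Rightarrow> ('e \<Rightarrow> 'e \<Rightarrow> 'f)
     \<Rightarrow> ('e \<Rightarrow> 'e \<Rightarrow> 'e) \<Rightarrow> ('e \<Rightarrow> 'f \<Rightarrow> 'f) \<Rightarrow> bool" where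
  "courant_algebroid smul ip cir a \<longleftrightarrow>
     pseudo_metric smul ip \<and>
     \<comment> \<open>a is a bundle map E \<rightarrow> TM\<close>
     (\<forall>e. is_vector_field (a e)) \<and>
     (\<forall>e1 e2 f. a (e1 + e2) f = a e1 f + a e2 f) \<and>
     (\<forall>g e f. a (smul g e) f = g * a e f) \<and>
     \<comment> \<open>the bracket is R-bilinear\<close>
     (\<forall>e1 e2 e3. cir (e1 + e2) e3 = cir e1 e3 + cir e2 e3) \<and>
     (\<forall>e1 e2 e3. cir e1 (e2 + e3) = cir e1 e2 + cir e1 e3) \<and>
     (\<forall>(c::real) e1 e2. cir (smul (of_real c) e1) e2 = smul (of_real c) (cir e1 e2)) \<and>
     (\<forall>(c::real) e1 e2. cir e1 (smul (of_real c) e2) = smul (of_real c) (cir e1 e2)) \<and>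
     \<comment> \<open>axioms (i)--(iii)\<close>
     (\<forall>e h1 h2. a e (ip h1 h2) = ip (cir e h1) h2 + ip h1 (cir e h2)) \<and>
     (\<forall>e. cir e e = smul (of_real (1/2)) (courant_D ip a (ip e e))) \<and>
     (\<forall>e1 e2 e3. cir e1 (cir e2 e3) = cir (cir e1 e2) e3 + cir e2 (cir e1 e3))"

end

theory Submission
  imports Defs
begin


locale dorf = module smul
  for smul :: "'f::{comm_ring_1,real_algebra_1} \<Rightarrow> 'e::ab_group_add \<Rightarrow> 'e" +
  fixes ip :: "'e \<Rightarrow> 'e \<Rightarrow> 'f"
    and nab :: "'e \<Rightarrow> 'e \<Rightarrow> 'e"
    and Del :: "'e \<Rightarrow> 'e \<Rightarrow> 'e"
    and rho :: "'e \<Rightarrow> 'f \<Rightarrow> 'f"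
    and DD :: "'f \<Rightarrow> 'e"
  assumes ip_sym: "ip a b = ip b a"
    and ip_add: "ip (a + b) c = ip a c + ip b c"
    and ip_smul: "ip (smul f a) b = f * ip a b"
    and nondeg: "(\<And>t. ip e t = 0) \<Longrightarrow> e = 0"
    and nab_add1: "nab (a + b) h = nab a h + nab b h"
    and nab_smul1: "nab (smul f a) h = smul f (nab a h)"
    and nab_add2: "nab e (a + b) = nab e a + nab e b"
    and nab_smul2: "nab e (smul f h) = smul f (nab e h) + smul (rho e f) h"
    and rho_vf: "is_vector_field (rho e)"
    and rho_add: "rho (a + b) f = rho a f + rho b f"
    and rho_smul: "rho (smul g a) f = g * rho a f"
    and metric: "rho e (ip a b) = ip (nab e a) b + ip a (nab e b)"
    and Del_ip: "ip (Del h e) t = ip (nab t e) h"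
    and nab_Del: "nab (Del h e) x = 0"
    and flat: "nab x (nab y w) - nab y (nab x w) - nab (nab x y - nab y x) w = 0"
    and faith: "(\<And>w. smul g w = 0) \<Longrightarrow> g = 0 \<or> (\<forall>e f. rho e f = 0)"
    and DD_ip: "ip (DD f) e = rho e f"
    and nab_DD: "nab (DD f) x = 0"
begin

definition circ where "circ a b = nab a b - nab b a + Del b a"

lemma ip_add2: "ip c (a + b) = ip c a + ip c b"
  using ip_add ip_sym by metis
lemma ip_smul2: "ip b (smul f a) = f * ip b a"
  using ip_smul ip_sym by metis
lemma ip_zero1[simp]: "ip 0 a = 0"
  using ip_add[of 0 0 a] by simp
lemma ip_zero2[simp]: "ip a 0 = 0"
  using ip_sym by simp
lemma ip_diff1: "ip (a - b) c = ip a c - ip b c"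
  using ip_add[of "a - b" b c] by (simp add: algebra_simps)
lemma ip_diff2: "ip c (a - b) = ip c a - ip c b"
  using ip_diff1 ip_sym by metis
lemma nab_zero1[simp]: "nab 0 h = 0"
  using nab_add1[of 0 0 h] by simp
lemma nab_zero2[simp]: "nab e 0 = 0"
  using nab_add2[of e 0 0] by simp
lemma nab_diff1: "nab (a - b) h = nab a h - nab b h"
  using nab_add1[of "a - b" b h] by (simp add: algebra_simps)
lemma nab_diff2: "nab e (a - b) = nab e a - nab e b"
  using nab_add2[of e "a - b" b] by (simp add: algebra_simps)
lemma rho_addf: "rho e (f + g) = rho e f + rho e g"
  using rho_vf unfolding is_vector_field_def by blast
lemma rho_mult: "rho e (f * g) = f * rho e g + rho e f * g"
  using rho_vf unfolding is_vector_field_def by blast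
lemma rho_scaleR: "rho e (c *\<^sub>R f) = c *\<^sub>R rho e f"
  using rho_vf unfolding is_vector_field_def by blast
lemma rho_difff: "rho e (f - g) = rho e f - rho e g"
  using rho_addf[of e "f - g" g] by (simp add: algebra_simps)
lemma rho_one: "rho e 1 = 0"
  using rho_mult[of e 1 1] by simp
lemma rho_of_real: "rho e (of_real c) = 0"
  using rho_scaleR[of e c 1] rho_one by (simp add: of_real_def)

lemma metric': "ip (nab e a) b = rho e (ip a b) - ip a (nab e b)"
  using metric by (simp add: algebra_simps)

lemma ip_circ: "ip (circ a b) s = ip (nab a b) s - ip (nab b a) s + ip (nab s a) b"
  by (simp add: circ_def ip_add ip_diff1 Del_ip)

lemma L1: "ip (nab x (Del h e)) t = rho x (ip (nab t e) h) - ip (nab (nab x t) e) h"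
  by (simp add: metric' Del_ip)

lemma flat_ip: "ip (nab x (nab y w)) z - ip (nab y (nab x w)) z - ip (nab (nab x y) w) z
   + ip (nab (nab y x) w) z = 0"
proof -
  have "ip (nab x (nab y w) - nab y (nab x w) - nab (nab x y - nab y x) w) z = 0"
    using flat by simp
  thus ?thesis by (simp only: ip_diff1 nab_diff1 ip_add, (simp add: algebra_simps)?)
qed

lemma K_zero:
  "nab e1 (Del e3 e2) - nab e2 (Del e3 e1) + nab e3 (Del e2 e1) + Del (circ e2 e3) e1
   - Del (circ e1 e3) e2 - Del e3 (circ e1 e2) = 0"
proof (rule nondeg)
  fix t
  have f4: "ip (Del (circ e2 e3) e1) t = ip (nab e2 e3) (nab t e1) - ip (nab e3 e2) (nab t e1)
     + ip (nab (nab t e1) e2) e3"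
    by (simp add: Del_ip ip_sym[of "nab t e1"] ip_circ)
  have f5: "ip (Del (circ e1 e3) e2) t = ip (nab e1 e3) (nab t e2) - ip (nab e3 e1) (nab t e2)
     + ip (nab (nab t e2) e1) e3"
    by (simp add: Del_ip ip_sym[of "nab t e2"] ip_circ)
  have f6: "ip (Del e3 (circ e1 e2)) t = ip (nab t (nab e1 e2)) e3 - ip (nab t (nab e2 e1)) e3
     + (rho t (ip (nab e3 e1) e2) - ip (nab (nab t e3) e1) e2)"
    by (simp add: Del_ip circ_def nab_add2 nab_diff2 ip_add ip_diff1 L1)
  have g1: "rho e1 (ip (nab t e2) e3) - ip (nab e1 e3) (nab t e2) - ip (nab t (nab e1 e2)) e3
     - ip (nab (nab e1 t) e2) e3 + ip (nab (nab t e1) e2) e3 = 0"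
    using flat_ip[of e1 t e2 e3] by (simp only: metric'[of e1 "nab t e2" e3] ip_sym[of "nab t e2" "nab e1 e3"], (simp add: algebra_simps)?)
  have g2: "rho e2 (ip (nab t e1) e3) - ip (nab e2 e3) (nab t e1) - ip (nab t (nab e2 e1)) e3
     - ip (nab (nab e2 t) e1) e3 + ip (nab (nab t e2) e1) e3 = 0"
    using flat_ip[of e2 t e1 e3] by (simp only: metric'[of e2 "nab t e1" e3] ip_sym[of "nab t e1" "nab e2 e3"], (simp add: algebra_simps)?)
  have g3: "rho e3 (ip (nab t e1) e2) - ip (nab e3 e2) (nab t e1) - ip (nab t (nab e3 e1)) e2
     - ip (nab (nab e3 t) e1) e2 + ip (nab (nab t e3) e1) e2 = 0"
    using flat_ip[of e3 t e1 e2] by (simp only: metric'[of e3 "nab t e1" e2] ip_sym[of "nab t e1" "nab e3 e2"], (simp add: algebra_simps)?)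
  have m: "rho t (ip (nab e3 e1) e2) = ip (nab t (nab e3 e1)) e2 + ip (nab e3 e1) (nab t e2)"
    by (rule metric)
  have h1: "ip (nab t (nab e1 e2)) e3 = rho e1 (ip (nab t e2) e3) - ip (nab e1 e3) (nab t e2)
   - ip (nab (nab e1 t) e2) e3 + ip (nab (nab t e1) e2) e3"
    using g1 by (simp add: algebra_simps)
  have h2: "ip (nab t (nab e2 e1)) e3 = rho e2 (ip (nab t e1) e3) - ip (nab e2 e3) (nab t e1)
   - ip (nab (nab e2 t) e1) e3 + ip (nab (nab t e2) e1) e3"
    using g2 by (simp add: algebra_simps)
  have h3: "ip (nab t (nab e3 e1)) e2 = rho e3 (ip (nab t e1) e2) - ip (nab e3 e2) (nab t e1)
   - ip (nab (nab e3 t) e1) e2 + ip (nab (nab t e3) e1) e2"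
    using g3 by (simp add: algebra_simps)
  show "ip (nab e1 (Del e3 e2) - nab e2 (Del e3 e1) + nab e3 (Del e2 e1) + Del (circ e2 e3) e1
   - Del (circ e1 e3) e2 - Del e3 (circ e1 e2)) t = 0"
    unfolding ip_add ip_diff1 L1 f4 f5 f6 m h1 h2 h3 by (simp add: algebra_simps)
qed


lemma jacobi: "circ e1 (circ e2 e3) = circ (circ e1 e2) e3 + circ e2 (circ e1 e3)"
proof -
  define R where "R x y w = nab x (nab y w) - nab y (nab x w) - nab (nab x y - nab y x) w" for x y w
  have R0: "R x y w = 0" for x y w using flat unfolding R_def .
  have "circ e1 (circ e2 e3) - circ (circ e1 e2) e3 - circ e2 (circ e1 e3)
    = (nab e1 (Del e3 e2) - nab e2 (Del e3 e1) + nab e3 (Del e2 e1) + Del (circ e2 e3) e1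
   - Del (circ e1 e3) e2 - Del e3 (circ e1 e2)) + (R e1 e2 e3 - R e1 e3 e2 + R e2 e3 e1)"
    unfolding R_def circ_def[of e2 e3] circ_def[of e1 e2] circ_def[of e1 e3]
    unfolding circ_def[of e1] circ_def[of _ e3] circ_def[of e2]
    by (simp add: nab_add1 nab_add2 nab_diff1 nab_diff2 nab_Del algebra_simps)
  also have "\<dots> = 0" using K_zero[of e1 e3 e2] R0 by simp
  finally show ?thesis by (simp add: algebra_simps)
qed

lemma rho_diff: "rho (a - b) f = rho a f - rho b f"
  using rho_add[of "a - b" b f] by (simp add: algebra_simps)

lemma flat_smul: "smul (rho x (rho y f) - rho y (rho x f) - rho (nab x y - nab y x) f) w = 0"
proof -
  have "nab x (nab y (smul f w)) - nab y (nab x (smul f w)) - nab (nab x y - nab y x) (smul f w)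
     = smul f (nab x (nab y w) - nab y (nab x w) - nab (nab x y - nab y x) w)
       + smul (rho x (rho y f) - rho y (rho x f) - rho (nab x y - nab y x) f) w"
    by (simp add: nab_smul2 nab_add2 rho_diff nab_diff1 algebra_simps)
  thus ?thesis using flat by simp
qed

lemma anchor_bracket: "rho x (rho y f) - rho y (rho x f) - rho (nab x y - nab y x) f = 0"
proof -
  have "(rho x (rho y f) - rho y (rho x f) - rho (nab x y - nab y x) f) = 0 \<or> (\<forall>e f. rho e f = 0)"
    by (rule faith) (rule flat_smul)
  thus ?thesis by auto
qed

lemma circ_DD: "circ (DD f) e = 0"
proof (rule nondeg)
  fix t
  have "ip (circ (DD f) e) t = - (rho e (rho t f) - rho t (rho e f) - rho (nab e t - nab t e) f)"
    by (simp add: ip_circ nab_DD metric' DD_ip ip_sym[of "DD f"] rho_diff algebra_simps)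
  thus "ip (circ (DD f) e) t = 0" using anchor_bracket by simp
qed

lemma DD_unique: "courant_D ip rho f = DD f"
  unfolding courant_D_def
proof (rule the_equality)
  show "\<forall>e. ip (DD f) e = rho e f" by (simp add: DD_ip)
  fix d assume d: "\<forall>e. ip d e = rho e f"
  have "d - DD f = 0" by (rule nondeg) (simp add: ip_diff1 d DD_ip)
  thus "d = DD f" by simp
qed

lemma circ_self: "circ e e = smul (of_real (1/2)) (courant_D ip rho (ip e e))"
proof -
  have "circ e e - smul (of_real (1/2)) (DD (ip e e)) = 0"
  proof (rule nondeg)
    fix t
    have "rho t (ip e e) = ip (nab t e) e + ip (nab t e) e" using metric[of t e e] ip_sym[of e "nab t e"] by simp
    hence "of_real (1/2) * rho t (ip e e) = (of_real (1/2) + of_real (1/2)) * ip (nab t e) e"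
      by (simp add: algebra_simps)
    also have "\<dots> = ip (nab t e) e"
    proof -
      have "(of_real (1/2) + of_real (1/2) :: 'f) = of_real (1/2 + 1/2)" by (rule of_real_add[symmetric])
      also have "\<dots> = 1" by simp
      finally show ?thesis by simp
    qed
    finally show "ip (circ e e - smul (of_real (1/2)) (DD (ip e e))) t = 0"
      by (simp add: ip_diff1 ip_smul ip_circ DD_ip)
  qed
  thus ?thesis by (simp add: DD_unique)
qed

lemma axiom_i: "rho e (ip h1 h2) = ip (circ e h1) h2 + ip h1 (circ e h2)"
  by (simp add: ip_sym[of h1 "circ e h2"] ip_circ metric ip_sym[of h1 "nab e h2"])

lemma circ_add1: "circ (a + b) c = circ a c + circ b c"
proof -
  have "circ (a + b) c - circ a c - circ b c = 0"
    by (rule nondeg) (simp add: ip_diff1 ip_circ nab_add1 nab_add2 ip_add ip_add2)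
  thus ?thesis by (simp add: algebra_simps)
qed

lemma circ_add2: "circ c (a + b) = circ c a + circ c b"
proof -
  have "circ c (a + b) - circ c a - circ c b = 0"
    by (rule nondeg) (simp add: ip_diff1 ip_circ nab_add1 nab_add2 ip_add ip_add2)
  thus ?thesis by (simp add: algebra_simps)
qed

lemma circ_real1: "circ (smul (of_real r) a) b = smul (of_real r) (circ a b)"
proof -
  have "circ (smul (of_real r) a) b - smul (of_real r) (circ a b) = 0"
    by (rule nondeg) (simp add: ip_diff1 ip_circ nab_smul1 nab_smul2 ip_add ip_smul ip_smul2
        rho_of_real algebra_simps)
  thus ?thesis by simp
qed

lemma circ_real2: "circ a (smul (of_real r) b) = smul (of_real r) (circ a b)"
proof -
  have "circ a (smul (of_real r) b) - smul (of_real r) (circ a b) = 0"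
    by (rule nondeg) (simp add: ip_diff1 ip_circ nab_smul1 nab_smul2 ip_add ip_smul ip_smul2
        rho_of_real algebra_simps)
  thus ?thesis by simp
qed

lemma curv_zero: "courant_curv nab circ x y w = 0"
  unfolding courant_curv_def circ_def using flat[of x y w]
  by (simp add: nab_add1 nab_Del)

lemma Q_zero: "Qop ip nab circ e1 e2 e3 = 0"
  unfolding Qop_def curv_zero
proof (rule the_equality)
  fix q assume "\<forall>t. ip q t = ip 0 e3 + ip 0 e1 + ip 0 e2"
  thus "q = 0" by (intro nondeg) simp
qed simp

lemma pm: "pseudo_metric smul ip"
  unfolding pseudo_metric_def using ip_sym ip_add ip_smul nondeg by blast

lemma courant: "courant_algebroid smul ip circ rho"
  unfolding courant_algebroid_def
  using pm rho_vf rho_add rho_smul circ_add1 circ_add2 circ_real1 circ_real2 axiom_i circ_self jacobi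
  by blast

end



lemma sum_add_fun:
  fixes f :: "'a::ab_group_add \<Rightarrow> 'b::ab_group_add"
  assumes "\<And>a b. f (a + b) = f a + f b"
  shows "f (sum g A) = (\<Sum>x\<in>A. f (g x))"
proof -
  interpret additive f by unfold_locales (rule assms)
  show ?thesis by (rule sum)
qed

theorem proposition3p13:
  fixes smul :: "'f::{comm_ring_1,real_algebra_1} \<Rightarrow> 'e::ab_group_add \<Rightarrow> 'e"
    and ip :: "'e \<Rightarrow> 'e \<Rightarrow> 'f"
    and n :: nat
    and u :: "nat \<Rightarrow> 'e"
    and Z :: "nat \<Rightarrow> 'e \<Rightarrow> 'e"
    and z :: "nat \<Rightarrow> 'f \<Rightarrow> 'f"
    and C :: "nat \<Rightarrow> nat \<Rightarrow> nat \<Rightarrow> 'f"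
  assumes module: "module smul"
    and metric: "pseudo_metric smul ip"
    and indep: "lin_indep_family smul n u"
    and cdo: "\<forall>i\<in>{1..n}. cov_diff_op smul (Z i) (z i)"
    and compat: "\<forall>i\<in>{1..n}. \<forall>e1 e2. ip (Z i e1) e2 + ip e1 (Z i e2) = z i (ip e1 e2)"
    and Zu: "\<forall>i\<in>{1..n}. \<forall>j\<in>{1..n}. Z i (u j) = (\<Sum>k\<in>{1..n}. smul (C i k j) (u k))"
    and isotropic: "\<forall>i\<in>{1..n}. \<forall>j\<in>{1..n}. ip (u i) (u j) = 0"
    and commutator: "\<forall>i\<in>{1..n}. \<forall>j\<in>{1..n}. \<forall>e.
        Z i (Z j e) - Z j (Z i e) = (\<Sum>k\<in>{1..n}. smul (C j i k - C i j k) (Z k e))"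
  shows "(\<forall>e1 e2 e3.
            courant_curv (nablaE smul ip n u Z) (circE smul ip n u Z) e1 e2 e3
              = nablaE smul ip n u Z (DeltaE smul ip n u Z e3 e2) e1 \<and>
            nablaE smul ip n u Z (DeltaE smul ip n u Z e3 e2) e1
              = Qop ip (nablaE smul ip n u Z) (circE smul ip n u Z) e1 e2 e3 \<and>
            Qop ip (nablaE smul ip n u Z) (circE smul ip n u Z) e1 e2 e3
              = circE smul ip n u Z (DD smul n u z (ip e1 e3)) e2 \<and>
            circE smul ip n u Z (DD smul n u z (ip e1 e3)) e2 = 0)
         \<and> courant_algebroid smul ip (circE smul ip n u Z) (anchorE ip n u z)"
proof -
  interpret M: module smul by (rule module)
  let ?I = "{1..n}"
  have ip_sym: "ip a b = ip b a" for a b using metric unfolding pseudo_metric_def by blast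
  have ip_add: "ip (a + b) c = ip a c + ip b c" for a b c using metric unfolding pseudo_metric_def by blast
  have ip_smul: "ip (smul f a) b = f * ip a b" for f a b using metric unfolding pseudo_metric_def by blast
  have nondeg: "(\<And>t. ip e t = 0) \<Longrightarrow> e = 0" for e using metric unfolding pseudo_metric_def by blast
  have ip_add2: "ip c (a + b) = ip c a + ip c b" for a b c using ip_add ip_sym by metis
  have ip_smul2: "ip b (smul f a) = f * ip b a" for f a b using ip_smul ip_sym by metis
  have ip_sum: "ip (sum g A) t = (\<Sum>x\<in>A. ip (g x) t)" for g :: "nat \<Rightarrow> 'e" and A t
    by (rule sum_add_fun) (rule ip_add)
  have ip_sum2: "ip t (sum g A) = (\<Sum>x\<in>A. ip t (g x))" for g :: "nat \<Rightarrow> 'e" and A t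
    by (rule sum_add_fun) (rule ip_add2)
  have Zadd: "Z i (a + b) = Z i a + Z i b" if "i \<in> ?I" for i a b
    using cdo that unfolding cov_diff_op_def by blast
  have Zsmul: "Z i (smul f e) = smul f (Z i e) + smul (z i f) e" if "i \<in> ?I" for i f e
    using cdo that unfolding cov_diff_op_def by blast
  have Zsum: "Z i (sum g A) = (\<Sum>x\<in>A. Z i (g x))" if "i \<in> ?I" for i and g :: "nat \<Rightarrow> 'e" and A
    by (rule sum_add_fun) (rule Zadd[OF that])
  have zvf: "is_vector_field (z i)" if "i \<in> ?I" for i
    using cdo that unfolding cov_diff_op_def by blast
  have zadd: "z i (f + g) = z i f + z i g" if "i \<in> ?I" for i f g
    using zvf[OF that] unfolding is_vector_field_def by blast
  have zmult: "z i (f * g) = f * z i g + z i f * g" if "i \<in> ?I" for i f g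
    using zvf[OF that] unfolding is_vector_field_def by blast
  have zscaleR: "z i (c *\<^sub>R f) = c *\<^sub>R z i f" if "i \<in> ?I" for i c f
    using zvf[OF that] unfolding is_vector_field_def by blast
  have compat': "ip (Z i a) b = z i (ip a b) - ip a (Z i b)" if "i \<in> ?I" for i a b
    using compat that by (simp add: algebra_simps)
  have ipZu: "ip y (Z i (u k)) = (\<Sum>l\<in>?I. C i l k * ip y (u l))" if "i \<in> ?I" "k \<in> ?I" for i k y
    using Zu that by (simp add: ip_sum2 ip_smul2)

  have P1: "nablaE smul ip n u Z x (nablaE smul ip n u Z y w)
     = (\<Sum>k\<in>?I. smul (\<Sum>i\<in>?I. ip x (u i) * z i (ip y (u k))) (Z k w))
       + (\<Sum>i\<in>?I. \<Sum>j\<in>?I. smul (ip x (u i) * ip y (u j)) (Z i (Z j w)))" for x y w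
  proof -
    have "nablaE smul ip n u Z x (nablaE smul ip n u Z y w)
       = (\<Sum>i\<in>?I. smul (ip x (u i)) (Z i (\<Sum>j\<in>?I. smul (ip y (u j)) (Z j w))))"
      by (simp add: nablaE_def)
    also have "\<dots> = (\<Sum>i\<in>?I. smul (ip x (u i)) (\<Sum>j\<in>?I. smul (ip y (u j)) (Z i (Z j w))
          + smul (z i (ip y (u j))) (Z j w)))"
    proof (rule sum.cong[OF refl])
      fix i assume i: "i \<in> ?I"
      show "smul (ip x (u i)) (Z i (\<Sum>j\<in>?I. smul (ip y (u j)) (Z j w))) =
        smul (ip x (u i)) (\<Sum>j\<in>?I. smul (ip y (u j)) (Z i (Z j w)) + smul (z i (ip y (u j))) (Z j w))"
        by (simp only: Zsum[OF i] Zsmul[OF i])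
    qed
    also have "\<dots> = (\<Sum>i\<in>?I. \<Sum>j\<in>?I. smul (ip x (u i) * ip y (u j)) (Z i (Z j w))
          + smul (ip x (u i) * z i (ip y (u j))) (Z j w))"
      by (simp add: M.scale_sum_right M.scale_right_distrib)
    also have "\<dots> = (\<Sum>i\<in>?I. \<Sum>j\<in>?I. smul (ip x (u i) * ip y (u j)) (Z i (Z j w)))
          + (\<Sum>i\<in>?I. \<Sum>j\<in>?I. smul (ip x (u i) * z i (ip y (u j))) (Z j w))"
      by (simp add: sum.distrib)
    also have "(\<Sum>i\<in>?I. \<Sum>j\<in>?I. smul (ip x (u i) * z i (ip y (u j))) (Z j w))
        = (\<Sum>k\<in>?I. smul (\<Sum>i\<in>?I. ip x (u i) * z i (ip y (u k))) (Z k w))"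
      by (subst sum.swap) (simp add: M.scale_sum_left)
    finally show ?thesis by (simp add: algebra_simps)
  qed
  have P2: "(\<Sum>i\<in>?I. \<Sum>j\<in>?I. smul (ip x (u i) * ip y (u j)) (Z i (Z j w)))
      - (\<Sum>i\<in>?I. \<Sum>j\<in>?I. smul (ip y (u i) * ip x (u j)) (Z i (Z j w)))
      = (\<Sum>k\<in>?I. smul (\<Sum>i\<in>?I. \<Sum>j\<in>?I. ip x (u i) * ip y (u j) * (C j i k - C i j k)) (Z k w))"
    for x y w
  proof -
    have "(\<Sum>i\<in>?I. \<Sum>j\<in>?I. smul (ip y (u i) * ip x (u j)) (Z i (Z j w)))
       = (\<Sum>i\<in>?I. \<Sum>j\<in>?I. smul (ip x (u i) * ip y (u j)) (Z j (Z i w)))"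
      by (subst sum.swap) (simp add: mult.commute)
    hence "(\<Sum>i\<in>?I. \<Sum>j\<in>?I. smul (ip x (u i) * ip y (u j)) (Z i (Z j w)))
      - (\<Sum>i\<in>?I. \<Sum>j\<in>?I. smul (ip y (u i) * ip x (u j)) (Z i (Z j w)))
      = (\<Sum>i\<in>?I. \<Sum>j\<in>?I. smul (ip x (u i) * ip y (u j)) (Z i (Z j w) - Z j (Z i w)))"
      by (simp add: sum_subtractf[symmetric] M.scale_right_diff_distrib)
    also have "\<dots> = (\<Sum>i\<in>?I. \<Sum>j\<in>?I. smul (ip x (u i) * ip y (u j))
                      (\<Sum>k\<in>?I. smul (C j i k - C i j k) (Z k w)))"
      using commutator by (intro sum.cong refl) simp
    also have "\<dots> = (\<Sum>i\<in>?I. \<Sum>j\<in>?I. \<Sum>k\<in>?I. smul (ip x (u i) * ip y (u j) * (C j i k - C i j k)) (Z k w))"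
      by (simp add: M.scale_sum_right)
    also have "\<dots> = (\<Sum>i\<in>?I. \<Sum>k\<in>?I. \<Sum>j\<in>?I. smul (ip x (u i) * ip y (u j) * (C j i k - C i j k)) (Z k w))"
      by (rule sum.cong[OF refl]) (rule sum.swap)
    also have "\<dots> = (\<Sum>k\<in>?I. \<Sum>i\<in>?I. \<Sum>j\<in>?I. smul (ip x (u i) * ip y (u j) * (C j i k - C i j k)) (Z k w))"
      by (rule sum.swap)
    also have "\<dots> = (\<Sum>k\<in>?I. smul (\<Sum>i\<in>?I. \<Sum>j\<in>?I. ip x (u i) * ip y (u j) * (C j i k - C i j k)) (Z k w))"
      by (simp add: M.scale_sum_left)
    finally show ?thesis .
  qed
  have P3a: "ip (nablaE smul ip n u Z x y) (u k)
      = (\<Sum>i\<in>?I. ip x (u i) * (z i (ip y (u k)) - (\<Sum>l\<in>?I. C i l k * ip y (u l))))"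
    if "k \<in> ?I" for x y k
    unfolding nablaE_def ip_sum ip_smul
  proof (rule sum.cong[OF refl])
    fix i assume i: "i \<in> ?I"
    show "ip x (u i) * ip (Z i y) (u k) = ip x (u i) * (z i (ip y (u k)) - (\<Sum>l\<in>?I. C i l k * ip y (u l)))"
      using compat'[OF i] ipZu[OF i that] by simp
  qed
  have P3: "nablaE smul ip n u Z (nablaE smul ip n u Z x y - nablaE smul ip n u Z y x) w
     = (\<Sum>k\<in>?I. smul ((\<Sum>i\<in>?I. ip x (u i) * (z i (ip y (u k)) - (\<Sum>l\<in>?I. C i l k * ip y (u l))))
          - (\<Sum>i\<in>?I. ip y (u i) * (z i (ip x (u k)) - (\<Sum>l\<in>?I. C i l k * ip x (u l))))) (Z k w))"
    for x y w
    unfolding nablaE_def[of _ _ _ _ _ "_ - _"]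
  proof (rule sum.cong[OF refl])
    fix k assume k: "k \<in> ?I"
    have "ip (nablaE smul ip n u Z x y - nablaE smul ip n u Z y x) (u k)
        = ip (nablaE smul ip n u Z x y) (u k) - ip (nablaE smul ip n u Z y x) (u k)"
      using ip_add[of "nablaE smul ip n u Z x y - nablaE smul ip n u Z y x" "nablaE smul ip n u Z y x" "u k"]
      by (simp add: algebra_simps)
    thus "smul (ip (nablaE smul ip n u Z x y - nablaE smul ip n u Z y x) (u k)) (Z k w) =
         smul ((\<Sum>i\<in>?I. ip x (u i) * (z i (ip y (u k)) - (\<Sum>l\<in>?I. C i l k * ip y (u l))))
          - (\<Sum>i\<in>?I. ip y (u i) * (z i (ip x (u k)) - (\<Sum>l\<in>?I. C i l k * ip x (u l))))) (Z k w)"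
      by (simp only: P3a[OF k])
  qed
  have coef: "(\<Sum>i\<in>?I. ip x (u i) * z i (ip y (u k))) - (\<Sum>i\<in>?I. ip y (u i) * z i (ip x (u k)))
     - ((\<Sum>i\<in>?I. ip x (u i) * (z i (ip y (u k)) - (\<Sum>l\<in>?I. C i l k * ip y (u l))))
          - (\<Sum>i\<in>?I. ip y (u i) * (z i (ip x (u k)) - (\<Sum>l\<in>?I. C i l k * ip x (u l)))))
     + (\<Sum>i\<in>?I. \<Sum>j\<in>?I. ip x (u i) * ip y (u j) * (C j i k - C i j k)) = 0" for x y k
  proof -
    have sw: "(\<Sum>i\<in>?I. \<Sum>l\<in>?I. ip y (u i) * (C i l k * ip x (u l)))
       = (\<Sum>i\<in>?I. \<Sum>j\<in>?I. ip x (u i) * ip y (u j) * C j i k)"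
      by (subst sum.swap) (simp add: mult_ac)
    have sw2: "(\<Sum>i\<in>?I. \<Sum>l\<in>?I. ip x (u i) * (C i l k * ip y (u l)))
       = (\<Sum>i\<in>?I. \<Sum>j\<in>?I. ip x (u i) * ip y (u j) * C i j k)"
      by (simp add: mult_ac)
    show ?thesis
      apply (simp add: right_diff_distrib sum_subtractf sum_distrib_left sum.distrib)
      apply (simp only: sw[simplified] sw2[simplified])
      apply simp
      done
  qed
  have flat: "nablaE smul ip n u Z x (nablaE smul ip n u Z y w) - nablaE smul ip n u Z y (nablaE smul ip n u Z x w)
      - nablaE smul ip n u Z (nablaE smul ip n u Z x y - nablaE smul ip n u Z y x) w = 0" for x y w
  proof -
    let ?S1x = "\<Sum>k\<in>?I. smul (\<Sum>i\<in>?I. ip x (u i) * z i (ip y (u k))) (Z k w)"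
    let ?S1y = "\<Sum>k\<in>?I. smul (\<Sum>i\<in>?I. ip y (u i) * z i (ip x (u k))) (Z k w)"
    let ?Dxy = "\<Sum>i\<in>?I. \<Sum>j\<in>?I. smul (ip x (u i) * ip y (u j)) (Z i (Z j w))"
    let ?Dyx = "\<Sum>i\<in>?I. \<Sum>j\<in>?I. smul (ip y (u i) * ip x (u j)) (Z i (Z j w))"
    let ?S3 = "\<Sum>k\<in>?I. smul ((\<Sum>i\<in>?I. ip x (u i) * (z i (ip y (u k)) - (\<Sum>l\<in>?I. C i l k * ip y (u l))))
          - (\<Sum>i\<in>?I. ip y (u i) * (z i (ip x (u k)) - (\<Sum>l\<in>?I. C i l k * ip x (u l))))) (Z k w)"
    let ?S2 = "\<Sum>k\<in>?I. smul (\<Sum>i\<in>?I. \<Sum>j\<in>?I. ip x (u i) * ip y (u j) * (C j i k - C i j k)) (Z k w)"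
    have "nablaE smul ip n u Z x (nablaE smul ip n u Z y w) - nablaE smul ip n u Z y (nablaE smul ip n u Z x w)
      - nablaE smul ip n u Z (nablaE smul ip n u Z x y - nablaE smul ip n u Z y x) w
      = (?S1x + ?Dxy) - (?S1y + ?Dyx) - ?S3"
      by (simp only: P1 P3)
    also have "\<dots> = ?S1x - ?S1y - ?S3 + (?Dxy - ?Dyx)" by (simp add: algebra_simps)
    also have "\<dots> = ?S1x - ?S1y - ?S3 + ?S2" by (simp only: P2)
    also have "\<dots> = (\<Sum>k\<in>?I. smul ((\<Sum>i\<in>?I. ip x (u i) * z i (ip y (u k))) - (\<Sum>i\<in>?I. ip y (u i) * z i (ip x (u k)))
     - ((\<Sum>i\<in>?I. ip x (u i) * (z i (ip y (u k)) - (\<Sum>l\<in>?I. C i l k * ip y (u l))))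
          - (\<Sum>i\<in>?I. ip y (u i) * (z i (ip x (u k)) - (\<Sum>l\<in>?I. C i l k * ip x (u l)))))
     + (\<Sum>i\<in>?I. \<Sum>j\<in>?I. ip x (u i) * ip y (u j) * (C j i k - C i j k))) (Z k w))"
      by (simp only: sum.distrib sum_subtractf M.scale_left_diff_distrib M.scale_left_distrib)
    also have "\<dots> = 0" by (simp only: coef M.scale_zero_left sum.neutral_const)
    finally show ?thesis .
  qed
  let ?nab = "nablaE smul ip n u Z"
  let ?Del = "DeltaE smul ip n u Z"
  let ?rho = "anchorE ip n u z"
  let ?DD = "DD smul n u z"
  have nab_add1: "?nab (a + b) h = ?nab a h + ?nab b h" for a b h
    by (simp add: nablaE_def ip_add M.scale_left_distrib sum.distrib)
  have nab_smul1: "?nab (smul f a) h = smul f (?nab a h)" for f a h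
    by (simp add: nablaE_def ip_smul M.scale_sum_right)
  have nab_add2: "?nab e (a + b) = ?nab e a + ?nab e b" for e a b
    unfolding nablaE_def sum.distrib[symmetric]
  proof (rule sum.cong[OF refl])
    fix i assume i: "i \<in> ?I"
    show "smul (ip e (u i)) (Z i (a + b)) = smul (ip e (u i)) (Z i a) + smul (ip e (u i)) (Z i b)"
      by (simp add: Zadd[OF i] M.scale_right_distrib)
  qed
  have nab_smul2: "?nab e (smul f h) = smul f (?nab e h) + smul (?rho e f) h" for e f h
  proof -
    have "?nab e (smul f h) = (\<Sum>i\<in>?I. smul (f * ip e (u i)) (Z i h) + smul (ip e (u i) * z i f) h)"
      unfolding nablaE_def
    proof (rule sum.cong[OF refl])
      fix i assume i: "i \<in> ?I"
      show "smul (ip e (u i)) (Z i (smul f h)) = smul (f * ip e (u i)) (Z i h) + smul (ip e (u i) * z i f) h"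
        by (simp add: Zsmul[OF i] M.scale_right_distrib mult.commute)
    qed
    thus ?thesis
      by (simp add: sum.distrib nablaE_def anchorE_def M.scale_sum_right M.scale_sum_left)
  qed
  have rho_vf: "is_vector_field (?rho e)" for e
    unfolding is_vector_field_def anchorE_def
  proof (intro conjI allI)
    fix f g
    show "(\<Sum>i\<in>?I. ip e (u i) * z i (f + g)) = (\<Sum>i\<in>?I. ip e (u i) * z i f) + (\<Sum>i\<in>?I. ip e (u i) * z i g)"
      unfolding sum.distrib[symmetric]
      by (rule sum.cong[OF refl]) (simp add: zadd distrib_left)
    show "(\<Sum>i\<in>?I. ip e (u i) * z i (f * g)) = f * (\<Sum>i\<in>?I. ip e (u i) * z i g) + (\<Sum>i\<in>?I. ip e (u i) * z i f) * g"
      unfolding sum_distrib_left sum_distrib_right sum.distrib[symmetric]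
      by (rule sum.cong[OF refl]) (simp add: zmult algebra_simps)
  next
    fix c :: real and f
    show "(\<Sum>i\<in>?I. ip e (u i) * z i (c *\<^sub>R f)) = c *\<^sub>R (\<Sum>i\<in>?I. ip e (u i) * z i f)"
      unfolding scaleR_sum_right
      by (rule sum.cong[OF refl]) (simp add: zscaleR)
  qed
  have rho_add: "?rho (a + b) f = ?rho a f + ?rho b f" for a b f
    by (simp add: anchorE_def ip_add distrib_right sum.distrib)
  have rho_smul: "?rho (smul g a) f = g * ?rho a f" for g a f
    by (simp add: anchorE_def ip_smul sum_distrib_left mult.assoc)
  have metric': "?rho e (ip a b) = ip (?nab e a) b + ip a (?nab e b)" for e a b
    unfolding anchorE_def nablaE_def ip_sum ip_sum2 ip_smul ip_smul2 sum.distrib[symmetric]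
  proof (rule sum.cong[OF refl])
    fix i assume i: "i \<in> ?I"
    show "ip e (u i) * z i (ip a b) = ip e (u i) * ip (Z i a) b + ip e (u i) * ip a (Z i b)"
    proof -
      have "z i (ip a b) = ip (Z i a) b + ip a (Z i b)" using compat i by metis
      thus ?thesis by (simp add: distrib_left)
    qed
  qed
  have Del_ip: "ip (?Del h e) t = ip (?nab t e) h" for h e t
    unfolding DeltaE_def nablaE_def ip_sum ip_smul
    by (rule sum.cong[OF refl]) (metis ip_sym mult.commute)
  have Del_u: "ip (?Del h e) (u j) = 0" if "j \<in> ?I" for h e j
    unfolding DeltaE_def ip_sum ip_smul
    by (rule sum.neutral) (use isotropic that in simp)
  have nab_Del: "?nab (?Del h e) x = 0" for h e x
    unfolding nablaE_def
    by (intro sum.neutral ballI) (simp add: Del_u del: atLeastAtMost_iff)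
  have DD_ip: "ip (?DD f) e = ?rho e f" for f e
    unfolding DD_def anchorE_def ip_sum ip_smul
    by (rule sum.cong[OF refl]) (metis ip_sym mult.commute)
  have DD_u: "ip (?DD f) (u j) = 0" if "j \<in> ?I" for f j
    unfolding DD_def ip_sum ip_smul
    by (rule sum.neutral) (use isotropic that in simp)
  have nab_DD: "?nab (?DD f) x = 0" for f x
    unfolding nablaE_def
    by (intro sum.neutral ballI) (simp add: DD_u del: atLeastAtMost_iff)
  have faith: "g = 0 \<or> (\<forall>e f. ?rho e f = 0)" if sg: "\<And>w. smul g w = 0" for g
  proof (cases "n = 0")
    case True
    thus ?thesis by (simp add: anchorE_def)
  next
    case False
    hence one: "1 \<in> ?I" by simp
    let ?c = "\<lambda>i::nat. if i = 1 then g else 0"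
    have "(\<Sum>i\<in>?I. smul (?c i) (u i)) = (\<Sum>i\<in>?I. if i = 1 then smul g (u i) else 0)"
      by (rule sum.cong) auto
    also have "\<dots> = smul g (u 1)" using one by (simp add: sum.delta)
    also have "\<dots> = 0" by (rule sg)
    finally have calc: "(\<Sum>i\<in>?I. smul (?c i) (u i)) = 0" .
    have "\<forall>i\<in>?I. ?c i = 0"
      using indep calc unfolding lin_indep_family_def by (elim allE[where x="?c"]) simp
    hence "?c 1 = 0" using one by blast
    thus ?thesis by simp
  qed
  have dorf: "dorf smul ip ?nab ?Del ?rho ?DD"
    apply (rule dorf.intro[OF module], rule dorf_axioms.intro)
                    apply (fact ip_sym)
                   apply (fact ip_add)
                  apply (fact ip_smul)
                 apply (fact nondeg)
                apply (fact nab_add1)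
               apply (fact nab_smul1)
              apply (fact nab_add2)
             apply (fact nab_smul2)
            apply (fact rho_vf)
           apply (fact rho_add)
          apply (fact rho_smul)
         apply (fact metric')
        apply (fact Del_ip)
       apply (fact nab_Del)
      apply (fact flat)
     apply (fact faith)
    apply (fact DD_ip)
   apply (fact nab_DD)
  done
  interpret D: dorf smul ip ?nab ?Del ?rho ?DD by (rule dorf)
  have circ_eq: "D.circ = circE smul ip n u Z"
    by (simp add: fun_eq_iff D.circ_def circE_def)
  show ?thesis
    unfolding circ_eq[symmetric]
    using D.curv_zero D.nab_Del D.Q_zero D.circ_DD D.courant by simp
qed

end
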